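(* Suppose an SCF $f:\Theta\to Z$ is mixed-Nash-implemented by a mechanism $\mathcal M=\langle M,g\rangle$. Let $(i,\theta)\in\mathcal I\times\Theta$ and $\lambda\in MNE^{(\mathcal M,\theta)}$. If $f(\theta)\in\arg\min_{z\in Z}u_i^\theta(z)$ and $\mathcal L_i^Z(f(\theta),\theta)$ is an $i$-max set, then $$\bigcup_{m_i\in M_i}\mathrm{SUPP}\big[g(m_i,\lambda_{-i})\big]=\{f(\theta)\}.$$
   Context: Standing setup: $\mathcal I=\{1,\dots,I\}$ is a finite set of agents with $I\ge 3$; $\Theta$ is a finite or countably infinite set of states; $Z$ is a finite set of pure outcomes; $Y=\Delta(Z)$ is the set of lotteries on $Z$, and each $z\in Z$ is identified with the degenerate lottery at $z$. For each $(i,\theta)$, $u_i^\theta:Z\to\mathbb R$ is a Bernoulli utility and $U_i^\theta(y)=\sum_{z\in Z}y_z u_i^\theta(z)$ for $y\in Y$. For $\alpha\in Y$: $\mathcal L_i^Y(\alpha,\theta)=\{y\in Y:U_i^\theta(\alpha)\ge U_i^\theta(y)\}$ and $\mathcal L_i^Z(\alpha,\theta)=\{z\in Z:U_i^\theta(\alpha)\ge u_i^\theta(z)\}$. $\mathrm{SUPP}[\mu]$ is the support of a probability $\mu$. A mechanism is $\mathcal M=\langle M=\times_{i}M_i,\ g:M\to Y\rangle$ with each $M_i$ countable; for a profile of mixed strategies $\lambda=(\lambda_i)_i\in\times_i\Delta(M_i)$ (or a mixture of pure and mixed strategies, e.g. $(m_i,\lambda_{-i})$), $g(\lambda)$ denotes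 the induced lottery on $Z$. $PNE^{(\mathcal M,\theta)}$ and $MNE^{(\mathcal M,\theta)}$ are the sets of pure- and mixed-strategy Nash equilibria of $\mathcal M$ at $\theta$ (agents maximize $U_i^\theta$ of the induced lottery). An SCF $f:\Theta\to Z$ is mixed-Nash-implemented by $\mathcal M$ if $\bigcup_{\lambda\in MNE^{(\mathcal M,\theta)}}\mathrm{SUPP}(g[\lambda])=\{f(\theta)\}$ for all $\theta\in\Theta$. For $(i,\theta)$, a nonempty $E\subseteq Z$ is an $i$-$\theta$-max set if $E\subseteq\arg\max_{z\in E}u_i^\theta(z)$ and $E\subseteq\arg\max_{z\in Z}u_j^\theta(z)$ for all $j\ne i$; $E$ is an $i$-max set if it is an $i$-$\theta$-max set for some $\theta\in\Theta$. *)

theory Defs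
  imports "HOL-Probability.Probability"
begin

text \<open>Agents: a finite type 'ag (the set I = UNIV); states: countable type 'st;
pure outcomes: finite type 'z (Z = UNIV); lotteries: 'z pmf;
messages: each M i is a subset of a countable type 'm.
u i th z is the Bernoulli utility u_i^theta(z).\<close>

definition EU :: "('ag \<Rightarrow> 'st \<Rightarrow> 'z::finite \<Rightarrow> real) \<Rightarrow> 'ag \<Rightarrow> 'st \<Rightarrow> 'z pmf \<Rightarrow> real" where
  "EU u i th y = (\<Sum>z\<in>UNIV. pmf y z * u i th z)"

definition LZ :: "('ag \<Rightarrow> 'st \<Rightarrow> 'z::finite \<Rightarrow> real) \<Rightarrow> 'ag \<Rightarrow> 'z pmf \<Rightarrow> 'st \<Rightarrow> 'z set" where
  "LZ u i alpha th = {z. EU u i th alpha \<ge> u i th z}"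

definition argmax_on :: "('z \<Rightarrow> real) \<Rightarrow> 'z set \<Rightarrow> 'z set" where
  "argmax_on h S = {z\<in>S. \<forall>z'\<in>S. h z' \<le> h z}"

definition is_i_theta_max_set :: "('ag \<Rightarrow> 'st \<Rightarrow> 'z::finite \<Rightarrow> real) \<Rightarrow> 'ag \<Rightarrow> 'st \<Rightarrow> 'z set \<Rightarrow> bool" where
  "is_i_theta_max_set u i th E \<longleftrightarrow> E \<noteq> {} \<and> E \<subseteq> argmax_on (u i th) E
      \<and> (\<forall>j. j \<noteq> i \<longrightarrow> E \<subseteq> argmax_on (u j th) UNIV)"

definition is_i_max_set :: "('ag \<Rightarrow> 'st \<Rightarrow> 'z::finite \<Rightarrow> real) \<Rightarrow> 'ag \<Rightarrow> 'z set \<Rightarrow> bool" where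
  "is_i_max_set u i E \<longleftrightarrow> (\<exists>th. is_i_theta_max_set u i th E)"

definition mixed_profiles :: "('ag \<Rightarrow> 'm set) \<Rightarrow> ('ag \<Rightarrow> 'm pmf) set" where
  "mixed_profiles M = {lam. \<forall>i. set_pmf (lam i) \<subseteq> M i}"

definition induced :: "(('ag::finite \<Rightarrow> 'm) \<Rightarrow> 'z pmf) \<Rightarrow> ('ag \<Rightarrow> 'm pmf) \<Rightarrow> 'z pmf" where
  "induced g lam = bind_pmf (Pi_pmf UNIV undefined lam) g"

definition MNE :: "('ag \<Rightarrow> 'st \<Rightarrow> 'z::finite \<Rightarrow> real) \<Rightarrow> ('ag::finite \<Rightarrow> 'm set)
     \<Rightarrow> (('ag \<Rightarrow> 'm) \<Rightarrow> 'z pmf) \<Rightarrow> 'st \<Rightarrow> ('ag \<Rightarrow> 'm pmf) set" where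
  "MNE u M g th = {lam \<in> mixed_profiles M.
      \<forall>i. \<forall>mu. set_pmf mu \<subseteq> M i \<longrightarrow>
        EU u i th (induced g (lam(i := mu))) \<le> EU u i th (induced g lam)}"

definition mixed_nash_implements ::
  "('ag \<Rightarrow> 'st \<Rightarrow> 'z::finite \<Rightarrow> real) \<Rightarrow> ('ag::finite \<Rightarrow> 'm set)
     \<Rightarrow> (('ag \<Rightarrow> 'm) \<Rightarrow> 'z pmf) \<Rightarrow> ('st \<Rightarrow> 'z) \<Rightarrow> bool" where
  "mixed_nash_implements u M g f \<longleftrightarrow>
     (\<forall>th. (\<Union>lam\<in>MNE u M g th. set_pmf (induced g lam)) = {f th})"

end

theory Submission
  imports Defs
begin

lemma EU_le:
  fixes u :: "'ag \<Rightarrow> 'st \<Rightarrow> 'z::finite \<Rightarrow> real"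
  assumes "\<And>z. z \<in> set_pmf y \<Longrightarrow> u i th z \<le> b"
  shows "EU u i th y \<le> b"
proof -
  have "EU u i th y \<le> (\<Sum>z\<in>UNIV. pmf y z * b)"
    unfolding EU_def
  proof (rule sum_mono)
    fix z :: 'z
    show "pmf y z * u i th z \<le> pmf y z * b"
    proof (cases "z \<in> set_pmf y")
      case True then show ?thesis using assms by (simp add: mult_left_mono)
    next
      case False then show ?thesis by (simp add: set_pmf_eq)
    qed
  qed
  also have "\<dots> = b" by (simp add: sum_distrib_right[symmetric] sum_pmf_eq_1)
  finally show ?thesis .
qed

lemma EU_ge:
  fixes u :: "'ag \<Rightarrow> 'st \<Rightarrow> 'z::finite \<Rightarrow> real"
  assumes "\<And>z. z \<in> set_pmf y \<Longrightarrow> b \<le> u i th z"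
  shows "b \<le> EU u i th y"
proof -
  have "(\<Sum>z\<in>UNIV. pmf y z * b) \<le> EU u i th y"
    unfolding EU_def
  proof (rule sum_mono)
    fix z :: 'z
    show "pmf y z * b \<le> pmf y z * u i th z"
    proof (cases "z \<in> set_pmf y")
      case True then show ?thesis using assms by (simp add: mult_left_mono)
    next
      case False then show ?thesis by (simp add: set_pmf_eq)
    qed
  qed
  moreover have "(\<Sum>z\<in>UNIV. pmf y z * b) = b" by (simp add: sum_distrib_right[symmetric] sum_pmf_eq_1)
  ultimately show ?thesis by simp
qed

lemma EU_const:
  fixes u :: "'ag \<Rightarrow> 'st \<Rightarrow> 'z::finite \<Rightarrow> real"
  assumes "\<And>z. z \<in> set_pmf y \<Longrightarrow> u i th z = c"
  shows "EU u i th y = c"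
  using EU_le[of y u i th c] EU_ge[of y c u i th] assms by force

lemma EU_min_supp:
  fixes u :: "'ag \<Rightarrow> 'st \<Rightarrow> 'z::finite \<Rightarrow> real"
  assumes "\<And>z. a \<le> u i th z" "EU u i th y \<le> a" "z \<in> set_pmf y"
  shows "u i th z = a"
proof (rule ccontr)
  assume "u i th z \<noteq> a"
  with assms(1) have gt: "u i th z > a" by (simp add: order_le_neq_trans)
  have pz: "pmf y z > 0" using assms(3) by (simp add: pmf_positive)
  have "EU u i th y - a = (\<Sum>w\<in>UNIV. pmf y w * (u i th w - a))"
    by (simp add: EU_def right_diff_distrib sum_subtractf sum_distrib_right[symmetric] sum_pmf_eq_1)
  also have "\<dots> \<ge> pmf y z * (u i th z - a)"
    by (rule member_le_sum) (use assms(1) in auto)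
  finally have "EU u i th y - a \<ge> pmf y z * (u i th z - a)" .
  moreover have "pmf y z * (u i th z - a) > 0" using pz gt by simp
  ultimately show False using assms(2) by simp
qed

lemma supp_induced_dev:
  fixes g :: "('ag::finite \<Rightarrow> 'm) \<Rightarrow> 'z pmf"
  assumes "z \<in> set_pmf (induced g (lam(i := mu)))"
  shows "\<exists>m\<in>set_pmf mu. z \<in> set_pmf (induced g (lam(i := return_pmf m)))"
proof -
  from assms obtain x where x: "x \<in> set_pmf (Pi_pmf UNIV undefined (lam(i := mu)))"
    and zx: "z \<in> set_pmf (g x)" by (auto simp: induced_def)
  have xs: "\<forall>j. x j \<in> set_pmf ((lam(i := mu)) j)"
    using x by (simp add: set_Pi_pmf PiE_dflt_def)
  have "x \<in> set_pmf (Pi_pmf UNIV undefined (lam(i := return_pmf (x i))))"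
  proof -
    have "\<forall>j. x j \<in> set_pmf ((lam(i := return_pmf (x i))) j)"
    proof
      fix j show "x j \<in> set_pmf ((lam(i := return_pmf (x i))) j)"
        using xs[rule_format, of j] by (cases "j = i") auto
    qed
    then show ?thesis by (simp add: set_Pi_pmf PiE_dflt_def del: fun_upd_apply)
  qed
  then have "z \<in> set_pmf (induced g (lam(i := return_pmf (x i))))"
    using zx by (auto simp: induced_def)
  moreover have "x i \<in> set_pmf mu" using xs by (metis fun_upd_same)
  ultimately show ?thesis by blast
qed

theorem lemma1:
  fixes u :: "'ag::finite \<Rightarrow> 'st::countable \<Rightarrow> 'z::finite \<Rightarrow> real"
    and M :: "'ag \<Rightarrow> 'm::countable set"
    and g :: "('ag \<Rightarrow> 'm) \<Rightarrow> 'z pmf"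
    and f :: "'st \<Rightarrow> 'z"
    and i :: 'ag and th :: 'st and lam :: "'ag \<Rightarrow> 'm pmf"
  assumes "CARD('ag) \<ge> 3"
    and "mixed_nash_implements u M g f"
    and "lam \<in> MNE u M g th"
    and "f th \<in> {z. \<forall>z'. u i th z \<le> u i th z'}"
    and "is_i_max_set u i (LZ u i (return_pmf (f th)) th)"
  shows "(\<Union>mi\<in>M i. set_pmf (induced g (lam(i := return_pmf mi)))) = {f th}"
proof -
  define E where "E = LZ u i (return_pmf (f th)) th"
  define a where "a = u i th (f th)"
  have Eeq: "E = {z. u i th z \<le> a}"
    by (simp add: E_def a_def LZ_def EU_def)
  have amin: "\<And>z. a \<le> u i th z" using assms(4) by (simp add: a_def)
  have impl: "set_pmf (induced g l) \<subseteq> {f t}" if "l \<in> MNE u M g t" for t l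
  proof -
    have "set_pmf (induced g l) \<subseteq> (\<Union>lam\<in>MNE u M g t. set_pmf (induced g lam))"
      using that by blast
    also have "\<dots> = {f t}" using assms(2) by (simp add: mixed_nash_implements_def)
    finally show ?thesis .
  qed
  have lamsupp: "set_pmf (induced g lam) = {f th}"
    using impl[OF assms(3)] set_pmf_not_empty by (metis subset_singletonD)
  have EUlam: "EU u i th (induced g lam) = a"
    by (rule EU_const) (use lamsupp a_def in auto)
  have lamMP: "lam \<in> mixed_profiles M" and lamNE: "\<And>k mu. set_pmf mu \<subseteq> M k \<Longrightarrow>
      EU u k th (induced g (lam(k := mu))) \<le> EU u k th (induced g lam)"
    using assms(3) by (auto simp: MNE_def)
  have suppE: "set_pmf (induced g (lam(i := return_pmf m))) \<subseteq> E" if m: "m \<in> M i" for m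
  proof
    fix z assume z: "z \<in> set_pmf (induced g (lam(i := return_pmf m)))"
    have "EU u i th (induced g (lam(i := return_pmf m))) \<le> a"
      using lamNE[of "return_pmf m" i] m EUlam by simp
    then have "u i th z = a" using EU_min_supp[of a u i th _ z, OF amin _ z] by blast
    then show "z \<in> E" using Eeq by simp
  qed
  have suppEmu: "set_pmf (induced g (lam(i := mu))) \<subseteq> E" if mu: "set_pmf mu \<subseteq> M i" for mu
    using supp_induced_dev[of _ g lam i mu] suppE mu by blast
  obtain th' where th': "is_i_theta_max_set u i th' E"
    using assms(5) by (auto simp: is_i_max_set_def E_def)
  have fE: "f th \<in> E" using Eeq a_def by simp
  have ci: "\<And>z. z \<in> E \<Longrightarrow> u i th' z = u i th' (f th)"
  proof -
    fix z assume "z \<in> E"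
    then have "z \<in> argmax_on (u i th') E" "f th \<in> argmax_on (u i th') E"
      using th' fE unfolding is_i_theta_max_set_def by auto
    then have "u i th' (f th) \<le> u i th' z" "u i th' z \<le> u i th' (f th)"
      using \<open>z \<in> E\<close> fE unfolding argmax_on_def by auto
    then show "u i th' z = u i th' (f th)" by linarith
  qed
  have cj: "u k th' z' \<le> u k th' z" if "k \<noteq> i" "z \<in> E" for k z z'
  proof -
    have "z \<in> argmax_on (u k th') UNIV" using th' that unfolding is_i_theta_max_set_def by auto
    then show ?thesis unfolding argmax_on_def by auto
  qed
  have NE': "lam(i := mu0) \<in> MNE u M g th'" if m: "set_pmf mu0 \<subseteq> M i" for mu0
  proof -
    let ?l = "lam(i := mu0)"
    have "?l \<in> mixed_profiles M" using lamMP m by (auto simp: mixed_profiles_def)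
    moreover have "EU u k th' (induced g (?l(k := mu))) \<le> EU u k th' (induced g ?l)"
      if mu: "set_pmf mu \<subseteq> M k" for k mu
    proof (cases "k = i")
      case True
      have "EU u k th' (induced g (?l(k := mu))) = u i th' (f th)"
        using True suppEmu[OF mu[unfolded True]] ci by (intro EU_const) auto
      moreover have "EU u k th' (induced g ?l) = u i th' (f th)"
        using True suppEmu[OF m] ci by (intro EU_const) auto
      ultimately show ?thesis by simp
    next
      case False
      have "EU u k th' (induced g (?l(k := mu))) \<le> u k th' (f th)"
        using cj[OF False fE] by (intro EU_le) auto
      moreover have "EU u k th' (induced g ?l) = u k th' (f th)"
      proof (rule EU_const)
        fix z assume "z \<in> set_pmf (induced g ?l)"
        then have "z \<in> E" using suppEmu[OF m] by blast
        then show "u k th' z = u k th' (f th)"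
          using cj[OF False \<open>z \<in> E\<close>, of "f th"] cj[OF False fE, of z] by linarith
      qed
      ultimately show ?thesis by simp
    qed
    ultimately show ?thesis by (auto simp: MNE_def)
  qed
  obtain m0 where m0: "m0 \<in> M i"
    using lamMP set_pmf_not_empty[of "lam i"] by (auto simp: mixed_profiles_def)
  have lamth': "lam \<in> MNE u M g th'"
    using NE'[of "lam i"] lamMP by (auto simp: mixed_profiles_def)
  have ff: "f th' = f th" using impl[OF lamth'] lamsupp by auto
  have sub: "set_pmf (induced g (lam(i := return_pmf m))) \<subseteq> {f th}" if "m \<in> M i" for m
    using impl[OF NE'[of "return_pmf m"]] that ff by simp
  have "set_pmf (induced g (lam(i := return_pmf m0))) = {f th}"
    using sub[OF m0] set_pmf_not_empty by (metis subset_singletonD)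
  then show ?thesis using sub m0 by blast
qed

end
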